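(* Let $W\in\mathbb C^{N\times N}$ be Hermitian positive definite, $\vec b\in\mathbb C^N$ with $\|\vec b\|_2=1$, and let $\vec x_k$ be the $k$-th iterate of the MINRES algorithm applied to $W\vec x=\vec b$. Let $\mu_T$ be the spectral measure of $(W,\vec b)$. Then for every $k\in\mathbb N$ (for which the orthogonal polynomials up to degree $k+1$ are defined), $$\|\vec r_k\|_2^2=\frac{1}{\sum_{j=0}^kp_j(0;\mu_T)^2}=\frac{1}{b_k(\mu_T)\big[p_{k+1}'(0;\mu_T)p_k(0;\mu_T)-p_k'(0;\mu_T)p_{k+1}(0;\mu_T)\big]}=\frac{\prod_{j=0}^{k-1}b_j(\mu_T)^2}{\pi_{k+1}'(0;\mu_T)\pi_k(0;\mu_T)-\pi_k'(0;\mu_T)\pi_{k+1}(0;\mu_T)}.$$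
   Context: Write $W=U\Lambda U^*$ with $U$ unitary and $\Lambda=\mathrm{diag}(\lambda_1,\dots,\lambda_N)$; the spectral measure of $(W,\vec b)$ is $\mu_T=\sum_j\omega_j\delta_{\lambda_j}$, $(\omega_j)=|U^*\vec b|^2$ (entrywise). $p_n(\lambda;\mu)$ are the orthonormal polynomials with positive leading coefficient for $\mu$; they satisfy $\lambda p_n=b_np_{n+1}+a_np_n+b_{n-1}p_{n-1}$ with $b_n=b_n(\mu)>0$, $p_{-1}=0$. $\pi_n(\lambda;\mu)$ is the monic orthogonal polynomial of degree $n$; primes denote derivatives in $\lambda$. MINRES iterate: $\vec x_k=\mathrm{argmin}_{\vec y\in\mathcal K_k}\|\vec b-W\vec y\|_2$ with $\mathcal K_k=\mathrm{span}\{\vec b,W\vec b,\dots,W^{k-1}\vec b\}$; $\vec r_k=\vec b-W\vec x_k$. *)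

theory Defs
  imports "HOL-Analysis.Analysis" "HOL-Computational_Algebra.Polynomial"
begin

definition adjoint_mat :: "complex^'n^'m \<Rightarrow> complex^'m^'n" where
  "adjoint_mat A = (\<chi> i j. cnj (A $ j $ i))"

definition unitary_mat :: "complex^'n^'n \<Rightarrow> bool" where
  "unitary_mat U \<longleftrightarrow> U ** adjoint_mat U = mat 1 \<and> adjoint_mat U ** U = mat 1"

definition hermitian_mat :: "complex^'n^'n \<Rightarrow> bool" where
  "hermitian_mat W \<longleftrightarrow> adjoint_mat W = W"

definition cinner_vec :: "complex^'n \<Rightarrow> complex^'n \<Rightarrow> complex" where
  "cinner_vec x y = (\<Sum>i\<in>UNIV. cnj (x $ i) * y $ i)"

definition hpd_mat :: "complex^'n^'n \<Rightarrow> bool" where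
  "hpd_mat W \<longleftrightarrow> hermitian_mat W \<and> (\<forall>x. x \<noteq> 0 \<longrightarrow> Re (cinner_vec x (W *v x)) > 0)"

definition diag_mat :: "('n \<Rightarrow> complex) \<Rightarrow> complex^'n^'n" where
  "diag_mat d = (\<chi> i j. if i = j then d i else 0)"

text \<open>The discrete measure with nodes lam j and weights om j; integrals of real polynomials.\<close>
definition spec_integral :: "('n::finite \<Rightarrow> real) \<Rightarrow> ('n \<Rightarrow> real) \<Rightarrow> (real \<Rightarrow> real) \<Rightarrow> real" where
  "spec_integral om lam f = (\<Sum>j\<in>UNIV. om j * f (lam j))"

definition spec_ip :: "('n::finite \<Rightarrow> real) \<Rightarrow> ('n \<Rightarrow> real) \<Rightarrow> real poly \<Rightarrow> real poly \<Rightarrow> real" where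
  "spec_ip om lam p q = spec_integral om lam (\<lambda>t. poly p t * poly q t)"

definition orthonormal_polys :: "('n::finite \<Rightarrow> real) \<Rightarrow> ('n \<Rightarrow> real) \<Rightarrow> nat \<Rightarrow> (nat \<Rightarrow> real poly) \<Rightarrow> bool" where
  "orthonormal_polys om lam K p \<longleftrightarrow>
     (\<forall>n\<le>K. degree (p n) = n \<and> lead_coeff (p n) > 0) \<and>
     (\<forall>m\<le>K. \<forall>n\<le>K. spec_ip om lam (p m) (p n) = (if m = n then 1 else 0))"

text \<open>Recurrence coefficient b_n: the coefficient of p_{n+1} in lambda p_n = b_n p_{n+1} + a_n p_n + b_{n-1} p_{n-1}.\<close>
definition rec_b :: "('n::finite \<Rightarrow> real) \<Rightarrow> ('n \<Rightarrow> real) \<Rightarrow> (nat \<Rightarrow> real poly) \<Rightarrow> nat \<Rightarrow> real" where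
  "rec_b om lam p n = spec_ip om lam ([:0, 1:] * p n) (p (Suc n))"

definition monic_op :: "(nat \<Rightarrow> real poly) \<Rightarrow> nat \<Rightarrow> real poly" where
  "monic_op p n = smult (1 / lead_coeff (p n)) (p n)"

fun krylov_vec :: "complex^'n^'n \<Rightarrow> complex^'n \<Rightarrow> nat \<Rightarrow> complex^'n" where
  "krylov_vec W b 0 = b"
| "krylov_vec W b (Suc i) = W *v krylov_vec W b i"

definition krylov :: "complex^'n^'n \<Rightarrow> complex^'n \<Rightarrow> nat \<Rightarrow> (complex^'n) set" where
  "krylov W b k = {(\<Sum>i<k. c i *s krylov_vec W b i) | c. True}"

definition minres_iterate :: "complex^'n^'n \<Rightarrow> complex^'n \<Rightarrow> nat \<Rightarrow> complex^'n \<Rightarrow> bool" where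
  "minres_iterate W b k x \<longleftrightarrow> x \<in> krylov W b k \<and>
     (\<forall>y\<in>krylov W b k. norm (b - W *v x) \<le> norm (b - W *v y))"

end

theory Submission
  imports Defs
begin

lemma norm_sq_vec: "complex_of_real ((norm (x::complex^'n))\<^sup>2) = (\<Sum>i\<in>UNIV. x$i * cnj (x$i))"
proof -
  have "(norm x)\<^sup>2 = (\<Sum>i\<in>UNIV. (cmod (x$i))\<^sup>2)"
    unfolding norm_vec_def L2_set_def by (simp add: sum_nonneg)
  then have "complex_of_real ((norm x)\<^sup>2) = (\<Sum>i\<in>UNIV. complex_of_real ((cmod (x$i))\<^sup>2))"
    by (simp only: of_real_sum)
  then show ?thesis by (simp only: complex_norm_square)
qed

lemma unitary_norm:
  fixes U :: "complex^'n^'n"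
  assumes "adjoint_mat U ** U = mat 1"
  shows "(norm (U *v v))\<^sup>2 = (norm v)\<^sup>2"
proof -
  have E: "\<And>t s. (\<Sum>r\<in>UNIV. cnj (U$r$t) * U$r$s) = (if t = s then 1 else 0)"
  proof -
    fix t s
    have "(adjoint_mat U ** U) $ t $ s = (if t = s then 1 else 0)" using assms by (simp add: mat_def)
    then show "(\<Sum>r\<in>UNIV. cnj (U$r$t) * U$r$s) = (if t = s then 1 else 0)"
      by (simp add: matrix_matrix_mult_def adjoint_mat_def)
  qed
  have "complex_of_real ((norm (U *v v))\<^sup>2) = (\<Sum>r\<in>UNIV. (\<Sum>s\<in>UNIV. U$r$s * v$s) * cnj (\<Sum>t\<in>UNIV. U$r$t * v$t))"
    unfolding norm_sq_vec by (simp add: matrix_vector_mult_def)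
  also have "\<dots> = (\<Sum>r\<in>UNIV. \<Sum>t\<in>UNIV. \<Sum>s\<in>UNIV. v$s * cnj (v$t) * (cnj (U$r$t) * U$r$s))"
    by (simp add: sum_distrib_left sum_distrib_right mult_ac)
  also have "\<dots> = (\<Sum>t\<in>UNIV. \<Sum>r\<in>UNIV. \<Sum>s\<in>UNIV. v$s * cnj (v$t) * (cnj (U$r$t) * U$r$s))"
    by (rule sum.swap)
  also have "\<dots> = (\<Sum>t\<in>UNIV. \<Sum>s\<in>UNIV. \<Sum>r\<in>UNIV. v$s * cnj (v$t) * (cnj (U$r$t) * U$r$s))"
    by (rule sum.cong[OF refl], rule sum.swap)
  also have "\<dots> = (\<Sum>t\<in>UNIV. \<Sum>s\<in>UNIV. v$s * cnj (v$t) * (\<Sum>r\<in>UNIV. cnj (U$r$t) * U$r$s))"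
    by (simp add: sum_distrib_left)
  also have "\<dots> = (\<Sum>t\<in>UNIV. v$t * cnj (v$t))"
    by (simp add: E if_distrib cong: if_cong)
  also have "\<dots> = complex_of_real ((norm v)\<^sup>2)" by (rule norm_sq_vec[symmetric])
  finally show ?thesis using of_real_eq_iff by blast
qed

lemma norm_sq_vec_real: "(norm (x::complex^'n))\<^sup>2 = (\<Sum>i\<in>UNIV. (cmod (x$i))\<^sup>2)"
  unfolding norm_vec_def L2_set_def by (simp add: sum_nonneg)

lemma kv_repr:
  fixes U :: "complex^'n^'n"
  assumes u1: "U ** adjoint_mat U = mat 1" and u2: "adjoint_mat U ** U = mat 1"
    and decomp: "W = U ** diag_mat (\<lambda>j. complex_of_real (lam j)) ** adjoint_mat U"
  shows "krylov_vec W b i = U *v (\<chi> j. (complex_of_real (lam j))^i * (adjoint_mat U *v b)$j)"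
proof (induction i)
  case 0
  have "U *v (adjoint_mat U *v b) = b" by (simp add: matrix_vector_mul_assoc u1)
  then show ?case by simp
next
  case (Suc i)
  define D where "D = diag_mat (\<lambda>j. complex_of_real (lam j))"
  have M: "W ** U = U ** D" unfolding decomp D_def
    by (simp add: matrix_mul_assoc[symmetric] u2)
  have Dv: "D *v v = (\<chi> j. complex_of_real (lam j) * v$j)" for v
  proof -
    have "(\<Sum>j\<in>UNIV. (if i = j then complex_of_real (lam i) else 0) * v$j) = complex_of_real (lam i) * v$i" for i
    proof -
      have "(\<Sum>j\<in>UNIV. (if i = j then complex_of_real (lam i) else 0) * v$j)
          = (\<Sum>j\<in>UNIV. (if i = j then complex_of_real (lam i) * v$j else 0))"
        by (rule sum.cong) auto
      then show ?thesis by simp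
    qed
    then show ?thesis unfolding D_def diag_mat_def matrix_vector_mult_def by (simp add: vec_eq_iff)
  qed
  have "krylov_vec W b (Suc i) = W *v (U *v (\<chi> j. (complex_of_real (lam j))^i * (adjoint_mat U *v b)$j))"
    using Suc by simp
  also have "\<dots> = U *v (D *v (\<chi> j. (complex_of_real (lam j))^i * (adjoint_mat U *v b)$j))"
    by (simp add: matrix_vector_mul_assoc M)
  also have "\<dots> = U *v (\<chi> j. (complex_of_real (lam j))^(Suc i) * (adjoint_mat U *v b)$j)"
    by (simp add: Dv mult_ac)
  finally show ?case .
qed

lemma comb_repr:
  fixes U :: "complex^'n^'n"
  assumes u1: "U ** adjoint_mat U = mat 1" and u2: "adjoint_mat U ** U = mat 1"
    and decomp: "W = U ** diag_mat (\<lambda>j. complex_of_real (lam j)) ** adjoint_mat U"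
  shows "(\<Sum>i<m. d i *s krylov_vec W b i) = U *v (\<chi> j. (\<Sum>i<m. d i * (complex_of_real (lam j))^i) * (adjoint_mat U *v b)$j)"
proof -
  have "(\<Sum>i<m. d i *s (U *v (\<chi> j. (complex_of_real (lam j))^i * beta$j))) $ r
     = (U *v (\<chi> j. (\<Sum>i<m. d i * (complex_of_real (lam j))^i) * beta$j)) $ r" for r beta
  proof -
    have "(\<Sum>i<m. d i *s (U *v (\<chi> j. (complex_of_real (lam j))^i * beta$j))) $ r
      = (\<Sum>i<m. \<Sum>s\<in>UNIV. d i * (U$r$s * ((complex_of_real (lam s))^i * beta$s)))"
      by (simp add: sum_component matrix_vector_mult_def sum_distrib_left)
    also have "\<dots> = (\<Sum>s\<in>UNIV. \<Sum>i<m. d i * (U$r$s * ((complex_of_real (lam s))^i * beta$s)))"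
      by (rule sum.swap)
    also have "\<dots> = (U *v (\<chi> j. (\<Sum>i<m. d i * (complex_of_real (lam j))^i) * beta$j)) $ r"
      by (simp add: matrix_vector_mult_def sum_distrib_left sum_distrib_right mult_ac)
    finally show ?thesis .
  qed
  then show ?thesis unfolding kv_repr[OF assms] by (simp add: vec_eq_iff)
qed

lemma comb_norm:
  fixes U :: "complex^'n^'n"
  assumes u1: "U ** adjoint_mat U = mat 1" and u2: "adjoint_mat U ** U = mat 1"
    and decomp: "W = U ** diag_mat (\<lambda>j. complex_of_real (lam j)) ** adjoint_mat U"
    and weights: "\<And>j. om j = (cmod ((adjoint_mat U *v b) $ j))\<^sup>2"
  shows "(norm (\<Sum>i<m. d i *s krylov_vec W b i))\<^sup>2 = (\<Sum>j\<in>UNIV. om j * (cmod (\<Sum>i<m. d i * (complex_of_real (lam j))^i))\<^sup>2)"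
  unfolding comb_repr[OF assms(1-3)] unfolding unitary_norm[OF u2] unfolding norm_sq_vec_real
  by (simp add: weights norm_mult power_mult_distrib mult_ac)


lemma x_mult: "[:0, 1:] * q = pCons 0 (q::real poly)"
  by (simp add: mult_pCons_left)

lemma ip_sym: "spec_ip om lam s t = spec_ip om lam t s"
  unfolding spec_ip_def spec_integral_def by (simp add: mult_ac)

lemma ip_sum_left: "spec_ip om lam (\<Sum>j\<in>A. f j) t = (\<Sum>j\<in>A. spec_ip om lam (f j) t)"
  unfolding spec_ip_def spec_integral_def poly_sum
  by (simp add: sum_distrib_left sum_distrib_right mult_ac sum.swap[of _ A])

lemma ip_smult_left: "spec_ip om lam (smult c s) t = c * spec_ip om lam s t"
  unfolding spec_ip_def spec_integral_def by (simp add: sum_distrib_left mult_ac)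

lemma ip_x: "spec_ip om lam (pCons 0 s) t = spec_ip om lam s (pCons 0 t)"
  unfolding spec_ip_def spec_integral_def by (simp add: mult_ac)

lemma ip_nonneg: "(\<And>j. om j \<ge> 0) \<Longrightarrow> spec_ip om lam s s \<ge> 0"
  unfolding spec_ip_def spec_integral_def by (simp add: sum_nonneg)

lemma ON_deg: "orthonormal_polys om lam K p \<Longrightarrow> n \<le> K \<Longrightarrow> degree (p n) = n"
  unfolding orthonormal_polys_def by blast

lemma ON_lc: "orthonormal_polys om lam K p \<Longrightarrow> n \<le> K \<Longrightarrow> lead_coeff (p n) > 0"
  unfolding orthonormal_polys_def by blast

lemma ON_ip: "orthonormal_polys om lam K p \<Longrightarrow> m \<le> K \<Longrightarrow> n \<le> K \<Longrightarrow>
   spec_ip om lam (p m) (p n) = (if m = n then 1 else 0)"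
  unfolding orthonormal_polys_def by blast

lemma ON_span:
  assumes ON: "orthonormal_polys om lam K p"
  shows "n \<le> K \<Longrightarrow> degree s \<le> n \<Longrightarrow> \<exists>c. s = (\<Sum>j\<le>n. smult (c j) (p j))"
proof (induction n arbitrary: s)
  case 0
  have d0: "degree (p 0) = 0" and l0: "lead_coeff (p 0) > 0" using ON_deg[OF ON] ON_lc[OF ON] by auto
  have e1: "[:coeff (p 0) 0:] = p 0" using degree_0_id[OF d0] .
  have e2: "[:coeff s 0:] = s" using degree_0_id[of s] 0 by simp
  have nz: "coeff (p 0) 0 \<noteq> 0" using l0 d0 by simp
  have "smult (coeff s 0 / coeff (p 0) 0) [:coeff (p 0) 0:] = [:coeff s 0:]" using nz by simp
  then have "s = smult (coeff s 0 / coeff (p 0) 0) (p 0)" using e1 e2 by simp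
  then show ?case by (intro exI[of _ "\<lambda>_. coeff s 0 / coeff (p 0) 0"]) simp
next
  case (Suc n)
  define a where "a = coeff s (Suc n) / lead_coeff (p (Suc n))"
  define s' where "s' = s - smult a (p (Suc n))"
  have dS: "degree (p (Suc n)) = Suc n" and lS: "lead_coeff (p (Suc n)) > 0"
    using ON_deg[OF ON Suc.prems(1)] ON_lc[OF ON Suc.prems(1)] by auto
  have "degree s' \<le> Suc n" unfolding s'_def
    by (intro degree_diff_le) (auto simp: dS Suc.prems intro: order.trans[OF degree_smult_le])
  moreover have "coeff s' (Suc n) = 0" unfolding s'_def a_def using dS lS by simp
  ultimately have "degree s' \<le> n"
  proof (cases "degree s' = Suc n")
    case True
    then have "s' \<noteq> 0" by auto
    then have "lead_coeff s' \<noteq> 0" by simp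
    then show ?thesis using True \<open>coeff s' (Suc n) = 0\<close> by simp
  qed (use \<open>degree s' \<le> Suc n\<close> in auto)
  then obtain c where c: "s' = (\<Sum>j\<le>n. smult (c j) (p j))" using Suc by auto
  have "s = (\<Sum>j\<le>n. smult (c j) (p j)) + smult a (p (Suc n))" using c unfolding s'_def by simp
  also have "\<dots> = (\<Sum>j\<le>Suc n. smult ((c(Suc n := a)) j) (p j))" by simp
  finally show ?case by blast
qed

lemma ON_coef:
  assumes ON: "orthonormal_polys om lam K p" and "n \<le> K" "m \<le> K"
  shows "spec_ip om lam (\<Sum>j\<le>n. smult (c j) (p j)) (p m) = (if m \<le> n then c m else 0)"
proof -
  have "spec_ip om lam (\<Sum>j\<le>n. smult (c j) (p j)) (p m) = (\<Sum>j\<le>n. c j * (if j = m then 1 else 0))"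
    unfolding ip_sum_left ip_smult_left
    by (rule sum.cong[OF refl]) (use assms in \<open>simp add: ON_ip[OF ON]\<close>)
  also have "\<dots> = (if m \<le> n then c m else 0)"
    by (simp add: if_distrib[of "\<lambda>x. _ * x"] cong: if_cong)
  finally show ?thesis .
qed

lemma ON_orth_low:
  assumes ON: "orthonormal_polys om lam K p" and "m \<le> K" "degree s < m"
  shows "spec_ip om lam s (p m) = 0"
proof -
  obtain c where c: "s = (\<Sum>j\<le>degree s. smult (c j) (p j))"
    using ON_span[OF ON, of "degree s" s] assms by auto
  show ?thesis using assms by (subst c, subst ON_coef[OF ON]) auto
qed

lemma ON_parseval:
  assumes ON: "orthonormal_polys om lam K p" and "n \<le> K"
  shows "spec_ip om lam (\<Sum>j\<le>n. smult (c j) (p j)) (\<Sum>j\<le>n. smult (c j) (p j)) = (\<Sum>j\<le>n. (c j)\<^sup>2)"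
proof -
  have "spec_ip om lam (\<Sum>j\<le>n. smult (c j) (p j)) (\<Sum>j\<le>n. smult (c j) (p j))
      = (\<Sum>i\<le>n. c i * spec_ip om lam (\<Sum>j\<le>n. smult (c j) (p j)) (p i))"
    by (subst ip_sym, simp add: ip_sum_left ip_smult_left)
  also have "\<dots> = (\<Sum>i\<le>n. (c i)\<^sup>2)"
    by (rule sum.cong[OF refl]) (use assms in \<open>simp add: ON_coef[OF ON] power2_eq_square\<close>)
  finally show ?thesis .
qed


lemma ON_rec:
  assumes ON: "orthonormal_polys om lam (Suc k) p" and nk: "n \<le> k"
  shows "\<exists>a. pCons 0 (p n) = smult (rec_b om lam p n) (p (Suc n)) + smult a (p n)
            + (if n = 0 then 0 else smult (rec_b om lam p (n - 1)) (p (n - 1)))"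
proof -
  let ?s = "pCons 0 (p n)"
  have pn0: "p n \<noteq> 0" using ON_lc[OF ON, of n] nk by auto
  have ds: "degree ?s = Suc n" using ON_deg[OF ON, of n] nk pn0 by simp
  obtain c where c: "?s = (\<Sum>j\<le>Suc n. smult (c j) (p j))"
    using ON_span[OF ON, of "Suc n" ?s] nk ds by auto
  have cj: "c j = spec_ip om lam ?s (p j)" if "j \<le> Suc n" for j
    using ON_coef[OF ON, of "Suc n" j c] that nk unfolding c[symmetric] by simp
  have cS: "c (Suc n) = rec_b om lam p n"
    using cj[of "Suc n"] by (simp add: rec_b_def x_mult)
  have clow: "c j = 0" if "Suc j < n" for j
  proof -
    have "c j = spec_ip om lam (pCons 0 (p j)) (p n)"
      using cj[of j] that ip_x[of om lam "p n" "p j"] ip_sym[of om lam "p n" "pCons 0 (p j)"] by simp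
    also have "\<dots> = 0"
      using ON_orth_low[OF ON, of n "pCons 0 (p j)"] that nk ON_deg[OF ON, of j]
      by (cases "p j = 0") auto
    finally show ?thesis .
  qed
  have split: "?s = (\<Sum>j<n. smult (c j) (p j)) + smult (c n) (p n) + smult (c (Suc n)) (p (Suc n))"
    using c by (simp add: lessThan_Suc_atMost[symmetric])
  show ?thesis
  proof (cases n)
    case 0
    then show ?thesis using split cS by (intro exI[of _ "c n"]) (simp add: add_ac)
  next
    case (Suc m)
    have cm: "c m = rec_b om lam p m"
      using cj[of m] Suc ip_x[of om lam "p n" "p m"] ip_sym[of om lam "p n" "pCons 0 (p m)"]
      by (simp add: rec_b_def x_mult)
    have "(\<Sum>j<n. smult (c j) (p j)) = smult (c m) (p m) + (\<Sum>j<m. smult (c j) (p j))"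
      using Suc by (simp add: add_ac)
    also have "(\<Sum>j<m. smult (c j) (p j)) = 0"
      by (rule sum.neutral) (use Suc clow in auto)
    finally show ?thesis using split cS cm Suc by (intro exI[of _ "c n"]) (simp add: add_ac)
  qed
qed

lemma ON_rec_eval:
  assumes ON: "orthonormal_polys om lam (Suc k) p" and nk: "n \<le> k"
  shows "\<exists>a. 0 = rec_b om lam p n * poly (p (Suc n)) 0 + a * poly (p n) 0
             + (if n = 0 then 0 else rec_b om lam p (n - 1) * poly (p (n - 1)) 0)
         \<and> poly (p n) 0 = rec_b om lam p n * poly (pderiv (p (Suc n))) 0 + a * poly (pderiv (p n)) 0
             + (if n = 0 then 0 else rec_b om lam p (n - 1) * poly (pderiv (p (n - 1))) 0)
         \<and> lead_coeff (p n) = rec_b om lam p n * lead_coeff (p (Suc n))"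
proof -
  obtain a where e: "pCons 0 (p n) = smult (rec_b om lam p n) (p (Suc n)) + smult a (p n)
            + (if n = 0 then 0 else smult (rec_b om lam p (n - 1)) (p (n - 1)))"
    using ON_rec[OF assms] by blast
  have e0: "poly (pCons 0 (p n)) 0 = poly (smult (rec_b om lam p n) (p (Suc n)) + smult a (p n)
            + (if n = 0 then 0 else smult (rec_b om lam p (n - 1)) (p (n - 1)))) 0"
    by (subst e) (rule refl)
  have e1: "poly (pderiv (pCons 0 (p n))) 0 = poly (pderiv (smult (rec_b om lam p n) (p (Suc n)) + smult a (p n)
            + (if n = 0 then 0 else smult (rec_b om lam p (n - 1)) (p (n - 1))))) 0"
    by (subst e) (rule refl)
  have e2: "coeff (pCons 0 (p n)) (Suc n) = coeff (smult (rec_b om lam p n) (p (Suc n)) + smult a (p n)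
            + (if n = 0 then 0 else smult (rec_b om lam p (n - 1)) (p (n - 1)))) (Suc n)"
    by (subst e) (rule refl)
  have dn: "degree (p n) = n" and dS: "degree (p (Suc n)) = Suc n" using ON_deg[OF ON] nk by auto
  have c1: "coeff (p n) (Suc n) = 0" using dn by (simp add: coeff_eq_0)
  have c2: "n \<noteq> 0 \<Longrightarrow> coeff (p (n - 1)) (Suc n) = 0" using ON_deg[OF ON, of "n - 1"] nk
    by (simp add: coeff_eq_0)
  show ?thesis
    apply (intro exI[of _ a] conjI)
    using e0 apply (simp split: if_splits)
    using e1 apply (simp add: pderiv_pCons pderiv_add pderiv_smult split: if_splits)
    using e2 c1 c2 dn dS apply (simp split: if_splits)
    done
qed

lemma ON_CD:
  assumes ON: "orthonormal_polys om lam (Suc k) p"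
  shows "n \<le> k \<Longrightarrow> (\<Sum>j\<le>n. (poly (p j) 0)\<^sup>2) =
     rec_b om lam p n * (poly (pderiv (p (Suc n))) 0 * poly (p n) 0 - poly (pderiv (p n)) 0 * poly (p (Suc n)) 0)"
proof (induction n)
  case 0
  obtain a where
    h0: "0 = rec_b om lam p 0 * poly (p (Suc 0)) 0 + a * poly (p 0) 0" and
    h1: "poly (p 0) 0 = rec_b om lam p 0 * poly (pderiv (p (Suc 0))) 0 + a * poly (pderiv (p 0)) 0"
    using ON_rec_eval[OF ON, of 0] by auto
  have "rec_b om lam p 0 * (poly (pderiv (p (Suc 0))) 0 * poly (p 0) 0 - poly (pderiv (p 0)) 0 * poly (p (Suc 0)) 0)
     = (rec_b om lam p 0 * poly (pderiv (p (Suc 0))) 0) * poly (p 0) 0 - poly (pderiv (p 0)) 0 * (rec_b om lam p 0 * poly (p (Suc 0)) 0)"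
    by (simp add: algebra_simps)
  also have "\<dots> = (poly (p 0) 0)\<^sup>2"
  proof -
    have A: "rec_b om lam p 0 * poly (pderiv (p (Suc 0))) 0 = poly (p 0) 0 - a * poly (pderiv (p 0)) 0"
      using h1 by simp
    have B: "rec_b om lam p 0 * poly (p (Suc 0)) 0 = - a * poly (p 0) 0"
      using h0 by simp
    show ?thesis unfolding A B by (simp add: algebra_simps power2_eq_square)
  qed
  finally show ?case by simp
next
  case (Suc m)
  let ?n = "Suc m"
  obtain a where
    h0: "0 = rec_b om lam p ?n * poly (p (Suc ?n)) 0 + a * poly (p ?n) 0 + rec_b om lam p m * poly (p m) 0" and
    h1: "poly (p ?n) 0 = rec_b om lam p ?n * poly (pderiv (p (Suc ?n))) 0 + a * poly (pderiv (p ?n)) 0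
             + rec_b om lam p m * poly (pderiv (p m)) 0"
    using ON_rec_eval[OF ON, of ?n] Suc.prems by auto
  have IH: "(\<Sum>j\<le>m. (poly (p j) 0)\<^sup>2) =
     rec_b om lam p m * (poly (pderiv (p ?n)) 0 * poly (p m) 0 - poly (pderiv (p m)) 0 * poly (p ?n) 0)"
    using Suc by simp
  have "rec_b om lam p ?n * (poly (pderiv (p (Suc ?n))) 0 * poly (p ?n) 0 - poly (pderiv (p ?n)) 0 * poly (p (Suc ?n)) 0)
     = (rec_b om lam p ?n * poly (pderiv (p (Suc ?n))) 0) * poly (p ?n) 0 - poly (pderiv (p ?n)) 0 * (rec_b om lam p ?n * poly (p (Suc ?n)) 0)"
    by (simp add: algebra_simps)
  also have "\<dots> = (poly (p ?n) 0)\<^sup>2 + rec_b om lam p m * (poly (pderiv (p ?n)) 0 * poly (p m) 0 - poly (pderiv (p m)) 0 * poly (p ?n) 0)"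
  proof -
    have A: "rec_b om lam p ?n * poly (pderiv (p (Suc ?n))) 0 = poly (p ?n) 0 - a * poly (pderiv (p ?n)) 0
             - rec_b om lam p m * poly (pderiv (p m)) 0" using h1 by simp
    have B: "rec_b om lam p ?n * poly (p (Suc ?n)) 0 = - a * poly (p ?n) 0 - rec_b om lam p m * poly (p m) 0"
      using h0 by simp
    show ?thesis unfolding A B by (simp add: algebra_simps power2_eq_square)
  qed
  finally show ?case using IH by simp
qed

lemma resid:
  "b - W *v (\<Sum>i<k. c i *s krylov_vec W b i) = (\<Sum>i<Suc k. (if i = 0 then 1 else - c (i - 1)) *s krylov_vec W b i)"
proof -
  have "(\<Sum>i<Suc k. (if i = 0 then 1 else - c (i - 1)) *s krylov_vec W b i)
     = (if 0 = (0::nat) then 1 else - c (0 - 1)) *s krylov_vec W b 0 + (\<Sum>i<k. (if Suc i = 0 then 1 else - c (Suc i - 1)) *s krylov_vec W b (Suc i))"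
    by (rule sum.lessThan_Suc_shift)
  also have "\<dots> = b + (\<Sum>i<k. - (c i *s (W *v krylov_vec W b i)))"
    by (simp add: vec_eq_iff)
  also have "\<dots> = b - W *v (\<Sum>i<k. c i *s krylov_vec W b i)"
    by (simp add: vec.sum vector_scalar_commute sum_negf)
  finally show ?thesis by simp
qed
lemma poly_ext_sum: fixes q :: "real poly" assumes "degree q \<le> m" shows "poly q t = (\<Sum>i<Suc m. coeff q i * t^i)"
proof -
  have "poly q t = (\<Sum>i\<le>degree q. coeff q i * t^i)" by (rule poly_altdef)
  also have "\<dots> = (\<Sum>i\<le>m. coeff q i * t^i)"
    by (rule sum.mono_neutral_left) (use assms in \<open>auto simp: coeff_eq_0\<close>)
  finally show ?thesis by (simp only: lessThan_Suc_atMost)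
qed
lemma Re_mr: "Re (z * complex_of_real t ^ i) = Re z * t ^ i"
proof -
  have "complex_of_real t ^ i = complex_of_real (t ^ i)" by (simp only: of_real_power)
  then show ?thesis by simp
qed
lemma Im_mr: "Im (z * complex_of_real t ^ i) = Im z * t ^ i"
proof -
  have "complex_of_real t ^ i = complex_of_real (t ^ i)" by (simp only: of_real_power)
  then show ?thesis by simp
qed
lemma re_im_split:
  "(cmod (\<Sum>i<m. d i * (complex_of_real t)^i))\<^sup>2 =
     (poly (\<Sum>i<m. monom (Re (d i)) i) t)\<^sup>2 + (poly (\<Sum>i<m. monom (Im (d i)) i) t)\<^sup>2"
  unfolding cmod_power2 Re_sum Im_sum Re_mr Im_mr poly_sum poly_monom ..

lemma poly_sum_monom_0: "poly (\<Sum>i<Suc m. monom (a i) i) 0 = (a 0 :: real)"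
  by (simp add: poly_sum poly_monom sum.lessThan_Suc_shift)

lemma degree_sum_monom: "degree (\<Sum>i<Suc m. monom (a i) i) \<le> m"
  by (rule degree_sum_le) (auto intro: order.trans[OF degree_monom_le])

lemma LB:
  assumes ON: "orthonormal_polys om lam (Suc k) p" and dg: "degree s \<le> k"
  shows "(poly s 0)\<^sup>2 \<le> spec_ip om lam s s * (\<Sum>j\<le>k. (poly (p j) 0)\<^sup>2)"
proof -
  obtain c where c: "s = (\<Sum>j\<le>k. smult (c j) (p j))" using ON_span[OF ON, of k s] dg by auto
  have "spec_ip om lam s s = (\<Sum>j\<le>k. (c j)\<^sup>2)" unfolding c by (rule ON_parseval[OF ON]) simp
  moreover have "poly s 0 = (\<Sum>j\<le>k. c j * poly (p j) 0)" unfolding c by (simp add: poly_sum)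
  ultimately show ?thesis by (simp add: Cauchy_Schwarz_ineq_sum)
qed


theorem proposition4p2:
  fixes W U :: "complex^'n^'n" and b x :: "complex^'n" and lam om :: "'n \<Rightarrow> real"
    and p :: "nat \<Rightarrow> real poly" and k :: nat
  assumes hpd: "hpd_mat W"
    and bnorm: "norm b = 1"
    and unitary: "unitary_mat U"
    and decomp: "W = U ** diag_mat (\<lambda>j. complex_of_real (lam j)) ** adjoint_mat U"
    and weights: "\<And>j. om j = (cmod ((adjoint_mat U *v b) $ j))\<^sup>2"
    and ops: "orthonormal_polys om lam (Suc k) p"
    and minres: "minres_iterate W b k x"
  shows "(norm (b - W *v x))\<^sup>2 = 1 / (\<Sum>j\<le>k. (poly (p j) 0)\<^sup>2)
    \<and> (norm (b - W *v x))\<^sup>2 =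
        1 / (rec_b om lam p k * (poly (pderiv (p (Suc k))) 0 * poly (p k) 0
                                 - poly (pderiv (p k)) 0 * poly (p (Suc k)) 0))
    \<and> (norm (b - W *v x))\<^sup>2 =
        (\<Prod>j<k. (rec_b om lam p j)\<^sup>2) /
        (poly (pderiv (monic_op p (Suc k))) 0 * poly (monic_op p k) 0
         - poly (pderiv (monic_op p k)) 0 * poly (monic_op p (Suc k)) 0)"
proof -
  have u1: "U ** adjoint_mat U = mat 1" and u2: "adjoint_mat U ** U = mat 1"
    using unitary unfolding unitary_mat_def by auto
  have om_nn: "\<And>j. om j \<ge> 0" using weights by simp
  define S where "S = (\<Sum>j\<le>k. (poly (p j) 0)\<^sup>2)"
  have aa: "adjoint_mat (adjoint_mat U) = U" by (simp add: adjoint_mat_def vec_eq_iff)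
  have mass: "(\<Sum>j\<in>UNIV. om j) = 1"
  proof -
    have "(\<Sum>j\<in>UNIV. om j) = (norm (adjoint_mat U *v b))\<^sup>2"
      by (simp add: weights norm_sq_vec_real)
    also have "\<dots> = (norm b)\<^sup>2" by (rule unitary_norm) (simp add: aa u1)
    finally show ?thesis using bnorm by simp
  qed
  have d0: "degree (p 0) = 0" and l0: "lead_coeff (p 0) > 0"
    using ON_deg[OF ops, of 0] ON_lc[OF ops, of 0] by auto
  have p0c: "p 0 = [:coeff (p 0) 0:]" using degree_0_id[OF d0] by simp
  have "spec_ip om lam (p 0) (p 0) = 1" using ON_ip[OF ops, of 0 0] by simp
  then have "(coeff (p 0) 0)\<^sup>2 * (\<Sum>j\<in>UNIV. om j) = 1"
  proof -
    have pc: "\<And>t. poly (p 0) t = coeff (p 0) 0" by (subst p0c) simp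
    assume "spec_ip om lam (p 0) (p 0) = 1"
    then have "(\<Sum>j\<in>UNIV. om j * (coeff (p 0) 0 * coeff (p 0) 0)) = 1"
      by (simp add: spec_ip_def spec_integral_def pc)
    moreover have "(\<Sum>j\<in>UNIV. om j * (coeff (p 0) 0 * coeff (p 0) 0)) = (\<Sum>j\<in>UNIV. om j) * (coeff (p 0) 0 * coeff (p 0) 0)"
      by (rule sum_distrib_right[symmetric])
    ultimately show ?thesis by (simp add: power2_eq_square mult_ac)
  qed
  then have "(coeff (p 0) 0)\<^sup>2 = 1" using mass by simp
  moreover have "coeff (p 0) 0 > 0" using l0 d0 by simp
  ultimately have lc0: "coeff (p 0) 0 = 1" by (smt (verit) power2_eq_1_iff)
  have P0: "poly (p 0) 0 = 1" by (subst p0c) (simp add: lc0)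
  have Spos: "S > 0"
  proof -
    have "(poly (p 0) 0)\<^sup>2 \<le> S" unfolding S_def
      by (rule member_le_sum) auto
    then show ?thesis using P0 by simp
  qed
  have resn: "(norm (b - W *v (\<Sum>i<k. c i *s krylov_vec W b i)))\<^sup>2 =
      (\<Sum>j\<in>UNIV. om j * (cmod (\<Sum>i<Suc k. (if i = 0 then 1 else - c (i - 1)) * (complex_of_real (lam j))^i))\<^sup>2)" for c
    unfolding resid by (rule comb_norm[OF u1 u2 decomp weights])
  have lower: "1 / S \<le> (norm (b - W *v y))\<^sup>2" if yin: "y \<in> krylov W b k" for y
  proof -
    obtain c where y: "y = (\<Sum>i<k. c i *s krylov_vec W b i)" using yin unfolding krylov_def by auto
    define d where "d = (\<lambda>i. if i = 0 then 1 else - c (i - 1))"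
    define qr where "qr = (\<Sum>i<Suc k. monom (Re (d i)) i)"
    define qi where "qi = (\<Sum>i<Suc k. monom (Im (d i)) i)"
    have "(norm (b - W *v y))\<^sup>2 = (\<Sum>j\<in>UNIV. om j * ((poly qr (lam j))\<^sup>2 + (poly qi (lam j))\<^sup>2))"
      unfolding y resn re_im_split qr_def qi_def d_def ..
    also have "\<dots> = spec_ip om lam qr qr + spec_ip om lam qi qi"
      by (simp add: spec_ip_def spec_integral_def power2_eq_square algebra_simps sum.distrib)
    finally have N: "(norm (b - W *v y))\<^sup>2 = spec_ip om lam qr qr + spec_ip om lam qi qi" .
    have "(poly qr 0)\<^sup>2 \<le> spec_ip om lam qr qr * S"
      unfolding S_def by (rule LB[OF ops]) (unfold qr_def, rule degree_sum_monom)
    moreover have "poly qr 0 = 1" unfolding qr_def poly_sum_monom_0 by (simp add: d_def)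
    ultimately have "1 / S \<le> spec_ip om lam qr qr" using Spos by (simp add: field_simps)
    moreover have "spec_ip om lam qi qi \<ge> 0" by (rule ip_nonneg[OF om_nn])
    ultimately show ?thesis using N by simp
  qed
  define q where "q = (\<Sum>j\<le>k. smult (poly (p j) 0 / S) (p j))"
  have dq: "degree q \<le> k" unfolding q_def
    by (rule degree_sum_le) (auto intro: order.trans[OF degree_smult_le] simp: ON_deg[OF ops])
  have q0: "poly q 0 = 1" unfolding q_def using Spos
    by (simp add: poly_sum S_def sum_divide_distrib[symmetric] power2_eq_square)
  have qq: "spec_ip om lam q q = 1 / S"
  proof -
    have "spec_ip om lam q q = (\<Sum>j\<le>k. (poly (p j) 0 / S)\<^sup>2)" unfolding q_def
      by (rule ON_parseval[OF ops]) simp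
    also have "\<dots> = S / S\<^sup>2" by (simp add: S_def power_divide sum_divide_distrib)
    finally show ?thesis using Spos by (simp add: power2_eq_square)
  qed
  define cy where "cy = (\<lambda>i. - complex_of_real (coeff q (Suc i)))"
  define y where "y = (\<Sum>i<k. cy i *s krylov_vec W b i)"
  have yK: "y \<in> krylov W b k" unfolding y_def krylov_def by blast
  have "(norm (b - W *v y))\<^sup>2 = (\<Sum>j\<in>UNIV. om j * (cmod (\<Sum>i<Suc k. complex_of_real (coeff q i) * (complex_of_real (lam j))^i))\<^sup>2)"
  proof -
    have e: "(if i = 0 then 1 else - cy (i - 1)) = complex_of_real (coeff q i)" for i
    proof -
      show "(if i = 0 then 1 else - cy (i - 1)) = complex_of_real (coeff q i)"
        using q0 by (cases i) (auto simp: cy_def poly_0_coeff_0)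
    qed
    show ?thesis unfolding y_def resn by (simp only: e)
  qed
  also have "\<dots> = (\<Sum>j\<in>UNIV. om j * (poly q (lam j))\<^sup>2)"
  proof -
    have "(\<Sum>i<Suc k. complex_of_real (coeff q i) * (complex_of_real t)^i) = complex_of_real (poly q t)" for t
      by (simp add: poly_ext_sum[OF dq, of t])
    then show ?thesis by simp
  qed
  also have "\<dots> = 1 / S" using qq by (simp add: spec_ip_def spec_integral_def power2_eq_square)
  finally have ynorm: "(norm (b - W *v y))\<^sup>2 = 1 / S" .
  have xK: "x \<in> krylov W b k" and xmin: "norm (b - W *v x) \<le> norm (b - W *v y)"
    using minres yK unfolding minres_iterate_def by auto
  have "(norm (b - W *v x))\<^sup>2 \<le> (norm (b - W *v y))\<^sup>2"
    using xmin by (simp add: power_mono)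
  with lower[OF xK] ynorm have R: "(norm (b - W *v x))\<^sup>2 = 1 / S" by simp
  have CD: "S = rec_b om lam p k * (poly (pderiv (p (Suc k))) 0 * poly (p k) 0 - poly (pderiv (p k)) 0 * poly (p (Suc k)) 0)"
    unfolding S_def by (rule ON_CD[OF ops]) simp
  have lcrel: "lead_coeff (p n) = rec_b om lam p n * lead_coeff (p (Suc n))" if "n \<le> k" for n
    using ON_rec_eval[OF ops that] by blast
  have lcprod: "n \<le> Suc k \<Longrightarrow> lead_coeff (p n) * (\<Prod>j<n. rec_b om lam p j) = 1" for n
  proof (induction n)
    case 0 then show ?case using lc0 d0 by simp
  next
    case (Suc n)
    then have "lead_coeff (p (Suc n)) * (\<Prod>j<Suc n. rec_b om lam p j)
        = (rec_b om lam p n * lead_coeff (p (Suc n))) * (\<Prod>j<n. rec_b om lam p j)" by (simp add: mult_ac)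
    also have "\<dots> = 1" using Suc lcrel[of n] by simp
    finally show ?case .
  qed
  define Q where "Q = (\<Prod>j<k. rec_b om lam p j)"
  define L0 where "L0 = lead_coeff (p k)"
  define L1 where "L1 = lead_coeff (p (Suc k))"
  have hQ: "L0 * Q = 1" using lcprod[of k] by (simp add: L0_def Q_def)
  have hL: "L0 = rec_b om lam p k * L1" using lcrel[of k] by (simp add: L0_def L1_def)
  have L0pos: "L0 > 0" and L1pos: "L1 > 0" using ON_lc[OF ops, of k] ON_lc[OF ops, of "Suc k"]
    by (auto simp: L0_def L1_def)
  have mon: "poly (pderiv (monic_op p (Suc k))) 0 * poly (monic_op p k) 0
         - poly (pderiv (monic_op p k)) 0 * poly (monic_op p (Suc k)) 0
       = (poly (pderiv (p (Suc k))) 0 * poly (p k) 0 - poly (pderiv (p k)) 0 * poly (p (Suc k)) 0) / (L0 * L1)"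
    unfolding monic_op_def L0_def[symmetric] L1_def[symmetric]
    using L0pos L1pos by (simp add: pderiv_smult field_simps)
  have prodQ: "(\<Prod>j<k. (rec_b om lam p j)\<^sup>2) = Q\<^sup>2" by (simp add: Q_def prod_power_distrib)
  define X where "X = poly (pderiv (p (Suc k))) 0 * poly (p k) 0 - poly (pderiv (p k)) 0 * poly (p (Suc k)) 0"
  have third: "1 / S = Q\<^sup>2 / (X / (L0 * L1))"
  proof -
    have Q: "Q = 1 / L0" using hQ L0pos by (simp add: field_simps)
    have r: "rec_b om lam p k = L0 / L1" using hL L1pos by (simp add: field_simps)
    have "S = L0 / L1 * X" using CD r by (simp add: X_def)
    then have Xe: "X = L1 * S / L0" using L0pos L1pos by (simp add: field_simps)
    show ?thesis unfolding Xe Q using L0pos L1pos Spos by (simp add: field_simps power2_eq_square)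
  qed
  show ?thesis
    using R CD third mon prodQ by (simp add: S_def X_def)
qed

end
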